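(* For all subsets $X_i, X_j \subseteq A$: if it is not the case that $X_j$ regulates $X_i$, then $X_i \leadsto X_j$.
   Context: Let $A$ be a finite set of agents. For each $a \in A$ let $S_a$ be a nonempty finite set, and let $S = \prod_{a \in A} S_a$ be the set of states; for $s \in S$ and $X \subseteq A$, $s|_X$ denotes the restriction of $s$ to the components in $X$ (extended elementwise to sets of states). For each $a \in A$ let $\to_a \subseteq S \times S$ be a relation that is either empty or left-total, such that whenever $s \to_a s'$, either $s = s'$ or $s$ and $s'$ differ only in the $a$-component. For $X \subseteq A$ let $\to_X = \bigcup_{a \in X} \to_a$ and $\to_X^*$ its reflexive-transitive closure; for $T \subseteq S$, $(T \to_X) = \{ t' : \exists t \in T,\ t \to_X t'\}$. Orbit operator: $\Omega_X(S') = \{ s' : \exists s \in S',\ s \to_X^* s'\}$. Equilibria operator: $\Psi_X(S') = \{ s \in \Omega_X(S') : \forall s' \in S,\ s \to_X^* s' \implies s' \to_X^* s \}$. $M$-relation: for $X, Y \subseteq A$, $X \leadsto Y$ iff for every $S' \subseteq S$, with $T = \Psi_X(\Psi_{X \cup Y}(S'))$, one has $(T \to_Y) \subseteq T$. Regulation: for $a_k, a_\ell \in A$, $a_k$ regulates $a_\ell$ iff there exist $s, s' \in S$ with $s|_{A \setminus \{a_k\}} = s'|_{A \setminus \{a_k\}}$ and $(\{s\} \to_{a_\ell})|_{\{a_\ell\}} \neq (\{s'\} \to_{a_\ell})|_{\{a_\ell\}}$. For $X, Y \subseteq A$, $X$ regulates $Y$ iff some $a_k \in X$ regulates some $a_\ell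 \in Y$. *)

theory Defs
  imports "HOL-Library.FuncSet"
begin

definition states :: "'a set \<Rightarrow> ('a \<Rightarrow> 's set) \<Rightarrow> ('a \<Rightarrow> 's) set" where
  "states A Sa = PiE A Sa"

definition network :: "'a set \<Rightarrow> ('a \<Rightarrow> 's set) \<Rightarrow> ('a \<Rightarrow> (('a \<Rightarrow> 's) \<times> ('a \<Rightarrow> 's)) set) \<Rightarrow> bool" where
  "network A Sa step \<longleftrightarrow>
     finite A \<and>
     (\<forall>a\<in>A. Sa a \<noteq> {} \<and> finite (Sa a)) \<and>
     (\<forall>a\<in>A. step a \<subseteq> states A Sa \<times> states A Sa) \<and>
     (\<forall>a\<in>A. step a = {} \<or> (\<forall>s\<in>states A Sa. \<exists>s'. (s, s') \<in> step a)) \<and>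
     (\<forall>a\<in>A. \<forall>(s, s')\<in>step a. s = s' \<or> (\<forall>b\<in>A - {a}. s b = s' b))"

definition stepX :: "('a \<Rightarrow> ('s \<times> 's) set) \<Rightarrow> 'a set \<Rightarrow> ('s \<times> 's) set" where
  "stepX step X = (\<Union>a\<in>X. step a)"

definition Omega :: "('a \<Rightarrow> ('s \<times> 's) set) \<Rightarrow> 'a set \<Rightarrow> 's set \<Rightarrow> 's set" where
  "Omega step X S' = {s'. \<exists>s\<in>S'. (s, s') \<in> (stepX step X)\<^sup>*}"

definition Psi :: "'s set \<Rightarrow> ('a \<Rightarrow> ('s \<times> 's) set) \<Rightarrow> 'a set \<Rightarrow> 's set \<Rightarrow> 's set" where
  "Psi S step X S' = {s \<in> Omega step X S'.
      \<forall>s'\<in>S. (s, s') \<in> (stepX step X)\<^sup>* \<longrightarrow> (s', s) \<in> (stepX step X)\<^sup>*}"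

definition leadsto :: "'s set \<Rightarrow> ('a \<Rightarrow> ('s \<times> 's) set) \<Rightarrow> 'a set \<Rightarrow> 'a set \<Rightarrow> bool" where
  "leadsto S step X Y \<longleftrightarrow>
     (\<forall>S'. S' \<subseteq> S \<longrightarrow>
        (let T = Psi S step X (Psi S step (X \<union> Y) S') in stepX step Y `` T \<subseteq> T))"

definition regulates_agent :: "'a set \<Rightarrow> ('a \<Rightarrow> 's set) \<Rightarrow> ('a \<Rightarrow> (('a \<Rightarrow> 's) \<times> ('a \<Rightarrow> 's)) set) \<Rightarrow> 'a \<Rightarrow> 'a \<Rightarrow> bool" where
  "regulates_agent A Sa step ak al \<longleftrightarrow>
     (\<exists>s\<in>states A Sa. \<exists>s'\<in>states A Sa.
        (\<forall>b\<in>A - {ak}. s b = s' b) \<and>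
        (\<lambda>t. t al) ` (step al `` {s}) \<noteq> (\<lambda>t. t al) ` (step al `` {s'}))"

definition regulates :: "'a set \<Rightarrow> ('a \<Rightarrow> 's set) \<Rightarrow> ('a \<Rightarrow> (('a \<Rightarrow> 's) \<times> ('a \<Rightarrow> 's)) set) \<Rightarrow> 'a set \<Rightarrow> 'a set \<Rightarrow> bool" where
  "regulates A Sa step X Y \<longleftrightarrow> (\<exists>ak\<in>X. \<exists>al\<in>Y. regulates_agent A Sa step ak al)"

end

theory Submission
  imports Defs
begin

lemma step_states:
  assumes net: "network A Sa step" and Z: "Z \<subseteq> A"
    and "(s, u) \<in> (stepX step Z)\<^sup>*" and "s \<in> states A Sa"
  shows "u \<in> states A Sa"
  using assms(3,4)
proof (induction rule: rtrancl_induct)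
  case base then show ?case by simp
next
  case (step y z)
  then obtain a where "a \<in> Z" "(y, z) \<in> step a" by (auto simp: stepX_def)
  with net Z show ?case unfolding network_def by blast
qed

lemma psi_closed:
  assumes net: "network A Sa step" and Z: "Z \<subseteq> A"
    and S': "S' \<subseteq> states A Sa"
    and s: "s \<in> Psi (states A Sa) step Z S'" and r: "(s, u) \<in> (stepX step Z)\<^sup>*"
  shows "u \<in> Psi (states A Sa) step Z S'"
proof -
  from s obtain p where p: "p \<in> S'" "(p, s) \<in> (stepX step Z)\<^sup>*"
    by (auto simp: Psi_def Omega_def)
  have ps: "p \<in> states A Sa" using p S' by auto
  have ss: "s \<in> states A Sa" using step_states[OF net Z p(2) ps] .
  have us: "u \<in> states A Sa" using step_states[OF net Z r ss] .
  have bk: "(u, s) \<in> (stepX step Z)\<^sup>*" using s us r by (auto simp: Psi_def)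
  have "(p, u) \<in> (stepX step Z)\<^sup>*" using p(2) r by (rule rtrancl_trans)
  then have "u \<in> Omega step Z S'" using p(1) unfolding Omega_def by blast
  moreover have "\<forall>w\<in>states A Sa. (u, w) \<in> (stepX step Z)\<^sup>* \<longrightarrow> (w, u) \<in> (stepX step Z)\<^sup>*"
  proof (intro ballI impI)
    fix w assume w: "w \<in> states A Sa" "(u, w) \<in> (stepX step Z)\<^sup>*"
    then have "(s, w) \<in> (stepX step Z)\<^sup>*" using r by (meson rtrancl_trans)
    then have "(w, s) \<in> (stepX step Z)\<^sup>*" using s w by (auto simp: Psi_def)
    then show "(w, u) \<in> (stepX step Z)\<^sup>*" using r by (meson rtrancl_trans)
  qed
  ultimately show ?thesis by (simp add: Psi_def)
qed

lemma net_sub: "network A Sa step \<Longrightarrow> a \<in> A \<Longrightarrow> step a \<subseteq> states A Sa \<times> states A Sa"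
  unfolding network_def by blast

lemma net_loc:
  assumes net: "network A Sa step" and a: "a \<in> A" and h: "(s, s') \<in> step a"
  shows "s = s' \<or> (\<forall>c\<in>A - {a}. s c = s' c)"
proof -
  have "\<forall>a\<in>A. \<forall>(s, s')\<in>step a. s = s' \<or> (\<forall>b\<in>A - {a}. s b = s' b)"
    using net unfolding network_def by (elim conjE)
  then have "\<forall>(s, s')\<in>step a. s = s' \<or> (\<forall>b\<in>A - {a}. s b = s' b)" using a by (rule bspec)
  from bspec[OF this h] show ?thesis by simp
qed

lemma net_loc': "network A Sa step \<Longrightarrow> a \<in> A \<Longrightarrow> (s, s') \<in> step a \<Longrightarrow> c \<in> A \<Longrightarrow> c \<noteq> a \<Longrightarrow> s c = s' c"
  using net_loc by fastforce

lemma upd_states: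
  "u \<in> states A Sa \<Longrightarrow> v \<in> states A Sa \<Longrightarrow> b \<in> A \<Longrightarrow> u(b := v b) \<in> states A Sa"
  unfolding states_def by (metis PiE_fun_upd PiE_mem insert_absorb)

lemma sim:
  assumes net: "network A Sa step" and X: "X \<subseteq> A" and b: "b \<in> A" "b \<notin> X"
    and nreg: "\<forall>a\<in>X. \<not> regulates_agent A Sa step b a"
    and r: "(s1, u) \<in> (stepX step X)\<^sup>*" and s1: "s1 \<in> states A Sa" and s2: "s2 \<in> states A Sa"
    and agree: "\<forall>x\<in>A-{b}. s1 x = s2 x"
  shows "u \<in> states A Sa \<and> u b = s1 b \<and> (s2, u(b := s2 b)) \<in> (stepX step X)\<^sup>*"
  using r
proof (induction rule: rtrancl_induct)
  case base
  have "s1(b := s2 b) = s2"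
  proof
    fix x show "(s1(b := s2 b)) x = s2 x"
    proof (cases "x = b")
      case True then show ?thesis by simp
    next
      case False
      show ?thesis
      proof (cases "x \<in> A")
        case True then show ?thesis using agree False by simp
      next
        case xA: False
        have "s1 x = undefined" "s2 x = undefined"
          using s1 s2 xA unfolding states_def by (blast intro: PiE_arb)+
        then show ?thesis using False by simp
      qed
    qed
  qed
  then show ?case using s1 by simp
next
  case (step u w)
  then obtain a where a: "a \<in> X" "(u, w) \<in> step a" by (auto simp: stepX_def)
  have aA: "a \<in> A" using a X by auto
  have ab: "a \<noteq> b" using a b by auto
  have us: "u \<in> states A Sa" and ub: "u b = s1 b"
    and IH: "(s2, u(b := s2 b)) \<in> (stepX step X)\<^sup>*" using step.IH by blast+
  have sub: "step a \<subseteq> states A Sa \<times> states A Sa" using net_sub[OF net aA] .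
  have ws: "w \<in> states A Sa" using sub a by auto
  have wu: "\<forall>c\<in>A - {a}. u c = w c" using net_loc'[OF net aA a(2)] by blast
  have wb: "w b = s1 b" using wu ub b ab by auto
  define u' where "u' = u(b := s2 b)"
  have u's: "u' \<in> states A Sa" using upd_states[OF us s2 b(1)] unfolding u'_def .
  have nr: "\<not> regulates_agent A Sa step b a" using nreg a by blast
  have agr: "\<forall>c\<in>A-{b}. u c = u' c" unfolding u'_def by auto
  have "(\<lambda>t. t a) ` (step a `` {u}) = (\<lambda>t. t a) ` (step a `` {u'})"
  proof -
    have "\<not> ((\<forall>c\<in>A-{b}. u c = u' c) \<and>
        (\<lambda>t. t a) ` (step a `` {u}) \<noteq> (\<lambda>t. t a) ` (step a `` {u'}))"
      using nr us u's unfolding regulates_agent_def by blast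
    then show ?thesis using agr by blast
  qed
  moreover have "w a \<in> (\<lambda>t. t a) ` (step a `` {u})" using a by blast
  ultimately have "w a \<in> (\<lambda>t. t a) ` (step a `` {u'})" by simp
  then obtain w' where w': "(u', w') \<in> step a" "w' a = w a" by (force simp: image_iff)
  have w's: "w' \<in> states A Sa" using sub w' by auto
  have w'u: "\<forall>c\<in>A - {a}. u' c = w' c" using net_loc'[OF net aA w'(1)] by blast
  have "w' = w(b := s2 b)"
  proof
    fix x show "w' x = (w(b := s2 b)) x"
    proof (cases "x \<in> A")
      case False
      have "w' x = undefined" "w x = undefined"
        using w's ws False unfolding states_def by (blast intro: PiE_arb)+
      then show ?thesis using False b(1) by auto
    next
      case True
      show ?thesis
      proof (cases "x = a")
        case True then show ?thesis using w' ab by simp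
      next
        case False
        have e1: "u' x = w' x" using w'u \<open>x \<in> A\<close> False by blast
        have e2: "u x = w x" using wu \<open>x \<in> A\<close> False by blast
        show ?thesis using e1 e2 by (cases "x = b") (simp_all add: u'_def)
      qed
    qed
  qed
  then have "(u(b := s2 b), w(b := s2 b)) \<in> stepX step X"
    using w' a unfolding u'_def stepX_def by auto
  with IH have "(s2, w(b := s2 b)) \<in> (stepX step X)\<^sup>*" by auto
  then show ?case using ws wb by blast
qed

theorem lemma1:
  fixes A :: "'a set" and Sa :: "'a \<Rightarrow> 's set"
    and step :: "'a \<Rightarrow> (('a \<Rightarrow> 's) \<times> ('a \<Rightarrow> 's)) set"
    and Xi Xj :: "'a set"
  assumes "network A Sa step"
    and "Xi \<subseteq> A" and "Xj \<subseteq> A"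
    and "\<not> regulates A Sa step Xj Xi"
  shows "leadsto (states A Sa) step Xi Xj"
  unfolding leadsto_def Let_def
proof (intro allI impI subsetI)
  note net = assms(1)
  fix S' t' assume S': "S' \<subseteq> states A Sa"
  define P where "P = Psi (states A Sa) step (Xi \<union> Xj) S'"
  define T where "T = Psi (states A Sa) step Xi P"
  assume "t' \<in> stepX step Xj `` Psi (states A Sa) step Xi (Psi (states A Sa) step (Xi \<union> Xj) S')"
  then obtain t b where t: "t \<in> T" and b: "b \<in> Xj" "(t, t') \<in> step b"
    unfolding T_def P_def stepX_def by auto
  have Z: "Xi \<union> Xj \<subseteq> A" using assms by auto
  have PS: "P \<subseteq> states A Sa"
  proof
    fix x assume "x \<in> P"
    then obtain p where "p \<in> S'" "(p, x) \<in> (stepX step (Xi \<union> Xj))\<^sup>*"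
      unfolding P_def Psi_def Omega_def by auto
    then show "x \<in> states A Sa" using step_states[OF net Z] S' by blast
  qed
  from t obtain p where p: "p \<in> P" "(p, t) \<in> (stepX step Xi)\<^sup>*"
    unfolding T_def Psi_def Omega_def by auto
  have mono: "stepX step Xi \<subseteq> stepX step (Xi \<union> Xj)" "stepX step Xj \<subseteq> stepX step (Xi \<union> Xj)"
    unfolding stepX_def by auto
  have "(p, t) \<in> (stepX step (Xi \<union> Xj))\<^sup>*" using p(2) rtrancl_mono[OF mono(1)] by auto
  then have tP: "t \<in> P" using psi_closed[OF net Z S'] p(1) unfolding P_def by blast
  have "(t, t') \<in> stepX step (Xi \<union> Xj)" using b unfolding stepX_def by auto
  then have t'P: "t' \<in> P" using psi_closed[OF net Z S'] tP unfolding P_def by blast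
  have ts: "t \<in> states A Sa" and t's: "t' \<in> states A Sa" using tP t'P PS by auto
  show "t' \<in> Psi (states A Sa) step Xi (Psi (states A Sa) step (Xi \<union> Xj) S')"
    unfolding P_def[symmetric] T_def[symmetric]
  proof (cases "b \<in> Xi")
    case True
    then have "(t, t') \<in> (stepX step Xi)\<^sup>*" using b unfolding stepX_def by auto
    then show "t' \<in> T" using psi_closed[OF net assms(2) PS] t unfolding T_def by blast
  next
    case False
    have bA: "b \<in> A" using b assms(3) by auto
    have nreg: "\<forall>a\<in>Xi. \<not> regulates_agent A Sa step b a"
      using assms(4) b unfolding regulates_def by auto
    have agree: "\<forall>x\<in>A-{b}. t' x = t x" using net_loc'[OF net bA b(2)] by force
    have t'Om: "t' \<in> Omega step Xi P" using t'P unfolding Omega_def by auto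
    have "\<forall>u\<in>states A Sa. (t', u) \<in> (stepX step Xi)\<^sup>* \<longrightarrow> (u, t') \<in> (stepX step Xi)\<^sup>*"
    proof (intro ballI impI)
      fix u assume us: "u \<in> states A Sa" and r: "(t', u) \<in> (stepX step Xi)\<^sup>*"
      have 1: "u b = t' b" "(t, u(b := t b)) \<in> (stepX step Xi)\<^sup>*"
        using sim[OF net assms(2) bA False nreg r t's ts agree] by auto
      define v where "v = u(b := t b)"
      have vs: "v \<in> states A Sa" using upd_states[OF us ts bA] unfolding v_def .
      have "(v, t) \<in> (stepX step Xi)\<^sup>*" using t 1(2) vs unfolding T_def Psi_def v_def by auto
      moreover have "\<forall>x\<in>A-{b}. v x = u x" unfolding v_def by auto
      ultimately have "(u, t(b := u b)) \<in> (stepX step Xi)\<^sup>*"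
        using sim[OF net assms(2) bA False nreg _ vs us] by blast
      moreover have "t(b := u b) = t'"
      proof
        fix x show "(t(b := u b)) x = t' x"
      proof (cases "x \<in> A")
        case True then show ?thesis using agree 1(1) by (cases "x = b") auto
      next
        case False
        have "t x = undefined" "t' x = undefined"
          using ts t's False unfolding states_def by (blast intro: PiE_arb)+
        then show ?thesis using False bA by auto
      qed
      qed
      ultimately show "(u, t') \<in> (stepX step Xi)\<^sup>*" by simp
    qed
    then show "t' \<in> T" using t'Om unfolding T_def Psi_def by auto
  qed
qed

end
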